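(* Let $G=(V,E)$ be an undirected, unweighted graph with $|V|=n$ and $|E|=m$. Let $\varepsilon\in(0,\frac1{18}]$ and suppose that $H$ is a $(1\pm\varepsilon)$-spectral sparsifier of $G$. Then $\widehat{H}$, the unweighted version of $H$, is an $\widetilde{O}(\sqrt{m})$-spanner of $G$.
   Context: A $(1\pm\varepsilon)$-spectral sparsifier of $G$ is a weighted graph $H=(V,E_H,w)$ with $E_H\subseteq E$ and positive weights such that $(1-\varepsilon)L_H\preceq L_G\preceq(1+\varepsilon)L_H$, where $L_G=B_G^\top B_G$ ($B_G$ the edge–vertex incidence matrix), $L_H=B_H^\top WB_H$ ($W$ the diagonal matrix of edge weights), and $A\preceq B$ means $x^\top Ax\le x^\top Bx$ for all $x$. $\widehat{H}$ is the graph $(V,E_H)$ with all weights equal to $1$. A subgraph $K$ of $G$ is a $t$-spanner if $d_K(u,v)\le t\cdot d_G(u,v)$ for all $u,v\in V$ ($d$ = shortest-path distance). $\widetilde{O}(f)$ means $f\cdot\mathrm{polylog}(n)$. *)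

theory Defs
  imports "HOL-Library.Extended_Nat" Complex_Main
begin

definition simple_graph :: "nat set \<Rightarrow> nat set set \<Rightarrow> bool" where
  "simple_graph V E \<longleftrightarrow> finite V \<and> (\<forall>e\<in>E. e \<subseteq> V \<and> card e = 2)"

definition laplacian :: "nat set set \<Rightarrow> (nat set \<Rightarrow> real) \<Rightarrow> nat \<Rightarrow> nat \<Rightarrow> real" where
  "laplacian E w u v =
     (if u = v then (\<Sum>e\<in>{e\<in>E. u \<in> e}. w e)
      else (if {u, v} \<in> E then - w {u, v} else 0))"

definition quad_form :: "nat set \<Rightarrow> (nat \<Rightarrow> nat \<Rightarrow> real) \<Rightarrow> (nat \<Rightarrow> real) \<Rightarrow> real" where
  "quad_form V L x = (\<Sum>u\<in>V. \<Sum>v\<in>V. x u * L u v * x v)"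

definition loewner_le :: "nat set \<Rightarrow> (nat \<Rightarrow> nat \<Rightarrow> real) \<Rightarrow> (nat \<Rightarrow> nat \<Rightarrow> real) \<Rightarrow> bool" where
  "loewner_le V A B \<longleftrightarrow> (\<forall>x. quad_form V A x \<le> quad_form V B x)"

definition spectral_sparsifier ::
  "real \<Rightarrow> nat set \<Rightarrow> nat set set \<Rightarrow> nat set set \<Rightarrow> (nat set \<Rightarrow> real) \<Rightarrow> bool" where
  "spectral_sparsifier eps V E EH w \<longleftrightarrow>
     EH \<subseteq> E \<and> (\<forall>e\<in>EH. w e > 0) \<and>
     loewner_le V (\<lambda>u v. (1 - eps) * laplacian EH w u v) (laplacian E (\<lambda>_. 1)) \<and>
     loewner_le V (laplacian E (\<lambda>_. 1)) (\<lambda>u v. (1 + eps) * laplacian EH w u v)"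

definition is_walk :: "nat set set \<Rightarrow> nat list \<Rightarrow> bool" where
  "is_walk E p \<longleftrightarrow> p \<noteq> [] \<and> (\<forall>i. Suc i < length p \<longrightarrow> {p ! i, p ! Suc i} \<in> E)"

text \<open>Shortest-path (hop) distance; \<infinity> if no walk exists.\<close>
definition hop_dist :: "nat set set \<Rightarrow> nat \<Rightarrow> nat \<Rightarrow> enat" where
  "hop_dist E u v = Inf {enat (length p - 1) | p. is_walk E p \<and> hd p = u \<and> last p = v}"

definition spanner :: "real \<Rightarrow> nat set \<Rightarrow> nat set set \<Rightarrow> nat set set \<Rightarrow> bool" where
  "spanner t V E EK \<longleftrightarrow> EK \<subseteq> E \<and>
     (\<forall>u\<in>V. \<forall>v\<in>V. hop_dist E u v \<noteq> \<infinity> \<longrightarrow>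
        hop_dist EK u v \<noteq> \<infinity> \<and> real (the_enat (hop_dist EK u v)) \<le> t * real (the_enat (hop_dist E u v)))"

end

theory Submission imports Defs begin

lemma walk_single[simp]: "is_walk E [x]"
  by (simp add: is_walk_def)

lemma walk_Cons2[simp]: "is_walk E (x # y # r) \<longleftrightarrow> {x,y} \<in> E \<and> is_walk E (y # r)"
proof
  assume h: "is_walk E (x # y # r)"
  have "Suc 0 < length (x # y # r)" by simp
  then have "{(x#y#r) ! 0, (x#y#r) ! Suc 0} \<in> E" using h unfolding is_walk_def by blast
  then have "{x,y} \<in> E" by simp
  moreover have "is_walk E (y # r)" unfolding is_walk_def
  proof (intro conjI allI impI)
    fix i assume "Suc i < length (y # r)"
    then have "Suc (Suc i) < length (x # y # r)" by simp
    then have "{(x#y#r) ! Suc i, (x#y#r) ! Suc (Suc i)} \<in> E" using h unfolding is_walk_def by blast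
    then show "{(y # r) ! i, (y # r) ! Suc i} \<in> E" by simp
  qed simp
  ultimately show "{x,y} \<in> E \<and> is_walk E (y # r)" by simp
next
  assume h: "{x,y} \<in> E \<and> is_walk E (y # r)"
  show "is_walk E (x # y # r)" unfolding is_walk_def
  proof (intro conjI allI impI)
    fix i assume i: "Suc i < length (x # y # r)"
    show "{(x # y # r) ! i, (x # y # r) ! Suc i} \<in> E"
    proof (cases i)
      case 0 then show ?thesis using h by simp
    next
      case (Suc j)
      then have "Suc j < length (y # r)" using i by simp
      then have "{(y#r) ! j, (y#r) ! Suc j} \<in> E" using h unfolding is_walk_def by blast
      then show ?thesis using Suc by simp
    qed
  qed simp
qed

lemma walk_append:
  assumes "is_walk E p" "is_walk E q" "last p = hd q"
  shows "is_walk E (p @ tl q) \<and> hd (p @ tl q) = hd p \<and> last (p @ tl q) = last q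
         \<and> length (p @ tl q) - 1 = (length p - 1) + (length q - 1)"
  using assms
proof (induction p rule: induct_list012)
  case 1 then show ?case by (simp add: is_walk_def)
next
  case (2 x)
  then have "q \<noteq> []" by (simp add: is_walk_def)
  then have "q = x # tl q" using 2 by (metis hd_Cons_tl last.simps)
  then have "[x] @ tl q = q" by simp
  then show ?case using 2 \<open>q \<noteq> []\<close> by simp
next
  case (3 x y r)
  have q: "q \<noteq> []" using 3 by (simp add: is_walk_def)
  have "is_walk E ((y # r) @ tl q) \<and> hd ((y # r) @ tl q) = y \<and> last ((y # r) @ tl q) = last q
         \<and> length ((y # r) @ tl q) - 1 = (length (y # r) - 1) + (length q - 1)"
    using 3 by simp
  then show ?case using 3 q
    by (cases "r @ tl q") (auto simp: last_append)
qed

lemma hop_le: "is_walk E p \<Longrightarrow> hd p = u \<Longrightarrow> last p = v \<Longrightarrow> hop_dist E u v \<le> enat (length p - 1)"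
  unfolding hop_dist_def by (rule Inf_lower) blast

lemma hop_self[simp]: "hop_dist E u u = 0"
  using hop_le[of E "[u]" u u] by (simp add: zero_enat_def[symmetric])

lemma hop_edge: "{u,v} \<in> E \<Longrightarrow> hop_dist E u v \<le> 1"
  using hop_le[of E "[u,v]" u v] by (simp add: one_enat_def)

lemma hop_obtain:
  assumes "hop_dist E u v = enat d"
  shows "\<exists>p. is_walk E p \<and> hd p = u \<and> last p = v \<and> length p - 1 = d"
proof -
  let ?S = "{enat (length p - 1) | p. is_walk E p \<and> hd p = u \<and> last p = v}"
  have ne: "?S \<noteq> {}"
  proof
    assume "?S = {}" then have "hop_dist E u v = \<infinity>" unfolding hop_dist_def by (simp add: Inf_enat_def)
    then show False using assms by simp
  qed
  then obtain x0 where "x0 \<in> ?S" by blast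
  then have "(LEAST y. y \<in> ?S) \<in> ?S" by (rule LeastI)
  then have "Inf ?S \<in> ?S" using ne by (simp only: Inf_enat_def if_False)
  then show ?thesis using assms unfolding hop_dist_def by auto
qed

lemma hop_tri: "hop_dist E u w \<le> hop_dist E u v + hop_dist E v w"
proof (cases "hop_dist E u v = \<infinity> \<or> hop_dist E v w = \<infinity>")
  case True then show ?thesis by auto
next
  case False
  then obtain d1 d2 where d: "hop_dist E u v = enat d1" "hop_dist E v w = enat d2" by auto
  obtain p where p: "is_walk E p" "hd p = u" "last p = v" "length p - 1 = d1" using hop_obtain[OF d(1)] by blast
  obtain q where q: "is_walk E q" "hd q = v" "last q = w" "length q - 1 = d2" using hop_obtain[OF d(2)] by blast
  have "hop_dist E u w \<le> enat (length (p @ tl q) - 1)"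
    using walk_append[of E p q] p q by (intro hop_le) auto
  also have "\<dots> = enat d1 + enat d2" using walk_append[of E p q] p q by simp
  finally show ?thesis using d by simp
qed

lemma walk_bound:
  assumes "is_walk E p" "\<And>y z. {y,z} \<in> E \<Longrightarrow> hop_dist EH y z \<le> enat K"
  shows "hop_dist EH (hd p) (last p) \<le> enat (K * (length p - 1))"
  using assms(1)
proof (induction p rule: induct_list012)
  case 1 then show ?case by (simp add: is_walk_def)
next
  case (2 x) then show ?case by (simp add: zero_enat_def)
next
  case (3 x y r)
  have "hop_dist EH x (last (y#r)) \<le> hop_dist EH x y + hop_dist EH y (last (y#r))" by (rule hop_tri)
  also have "\<dots> \<le> enat K + enat (K * (length (y#r) - 1))"
    using 3 assms(2) by (intro add_mono) auto
  also have "\<dots> = enat (K * (length (x#y#r) - 1))" by (simp add: algebra_simps)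
  finally show ?case by simp
qed

definition Le :: "nat set \<Rightarrow> nat \<Rightarrow> nat \<Rightarrow> real" where
  "Le e u v = (if u = v then (if u \<in> e then 1 else 0) else (if e = {u,v} then -1 else 0))"

definition qe :: "(nat \<Rightarrow> real) \<Rightarrow> nat set \<Rightarrow> real" where
  "qe x e = (\<Sum>u\<in>e. \<Sum>v\<in>e. (x u - x v)^2) / 2"

definition sabs :: "(nat \<Rightarrow> real) \<Rightarrow> nat set \<Rightarrow> real" where
  "sabs x e = (\<Sum>u\<in>e. \<Sum>v\<in>e. \<bar>x u - x v\<bar>) / 2"

lemma qe_pair: "a \<noteq> b \<Longrightarrow> qe x {a,b} = (x a - x b)^2"
  unfolding qe_def by (simp add: power2_commute)

lemma sabs_pair: "a \<noteq> b \<Longrightarrow> sabs x {a,b} = \<bar>x a - x b\<bar>"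
  unfolding sabs_def by (simp add: abs_minus_commute)

lemma card2_obtain: "card e = 2 \<Longrightarrow> \<exists>a b. a \<noteq> b \<and> e = {a,b}"
  by (metis card_2_iff)

lemma lap_sum: "finite F \<Longrightarrow> laplacian F w u v = (\<Sum>e\<in>F. w e * Le e u v)"
proof (cases "u = v")
  case True
  assume f: "finite F"
  have "(\<Sum>e\<in>F. w e * Le e u v) = (\<Sum>e\<in>F. if u \<in> e then w e else 0)"
    using True unfolding Le_def by (intro sum.cong) auto
  also have "\<dots> = (\<Sum>e\<in>{e\<in>F. u \<in> e}. w e)" using f by (simp add: sum.inter_filter)
  finally show ?thesis using True unfolding laplacian_def by simp
next
  case False
  assume f: "finite F"
  have "(\<Sum>e\<in>F. w e * Le e u v) = (\<Sum>e\<in>F. if {u,v} = e then - w e else 0)"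
    using False unfolding Le_def by (intro sum.cong) auto
  also have "\<dots> = (if {u,v} \<in> F then - w {u,v} else 0)" using f by simp
  finally show ?thesis using False unfolding laplacian_def by simp
qed

lemma edge_quad:
  assumes "finite V" "e \<subseteq> V" "card e = 2"
  shows "(\<Sum>u\<in>V. \<Sum>v\<in>V. x u * Le e u v * x v) = qe x e"
proof -
  obtain a b where ab: "a \<noteq> b" "e = {a,b}" using card2_obtain[OF assms(3)] by blast
  have z: "x u * Le e u v * x v = 0" if "u \<notin> e \<or> v \<notin> e" for u v
    using that ab unfolding Le_def by auto
  have "(\<Sum>u\<in>V. \<Sum>v\<in>V. x u * Le e u v * x v) = (\<Sum>u\<in>e. \<Sum>v\<in>V. x u * Le e u v * x v)"
    using assms z by (intro sum.mono_neutral_right) (auto intro: sum.neutral)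
  also have "\<dots> = (\<Sum>u\<in>e. \<Sum>v\<in>e. x u * Le e u v * x v)"
    using assms z by (intro sum.cong refl sum.mono_neutral_right) (auto)
  also have "\<dots> = (x a - x b)^2" using ab unfolding Le_def
    by (simp add: power2_diff power2_eq_square insert_commute algebra_simps)
  finally show ?thesis using ab qe_pair by simp
qed

lemma quad_lap:
  assumes "simple_graph V E" "F \<subseteq> E"
  shows "quad_form V (laplacian F w) x = (\<Sum>e\<in>F. w e * qe x e)"
proof -
  have fV: "finite V" and eV: "\<And>e. e \<in> F \<Longrightarrow> e \<subseteq> V \<and> card e = 2"
    using assms unfolding simple_graph_def by auto
  have fF: "finite F" using fV eV by (meson Pow_iff finite_Pow_iff finite_subset subsetI)
  have "quad_form V (laplacian F w) x = (\<Sum>u\<in>V. \<Sum>v\<in>V. \<Sum>e\<in>F. w e * (x u * Le e u v * x v))"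
    unfolding quad_form_def lap_sum[OF fF]
    by (simp add: sum_distrib_left sum_distrib_right algebra_simps)
  also have "\<dots> = (\<Sum>e\<in>F. w e * (\<Sum>u\<in>V. \<Sum>v\<in>V. x u * Le e u v * x v))"
    by (simp add: sum_distrib_left sum.swap[of _ V F] sum.swap[of _ V F])
  also have "\<dots> = (\<Sum>e\<in>F. w e * qe x e)"
    using eV fV by (intro sum.cong refl) (simp add: edge_quad)
  finally show ?thesis .
qed

lemma quad_scale: "quad_form V (\<lambda>u v. c * L u v) x = c * quad_form V L x"
  unfolding quad_form_def by (simp add: sum_distrib_left algebra_simps)


definition lay :: "nat set set \<Rightarrow> nat \<Rightarrow> nat \<Rightarrow> nat \<Rightarrow> nat" where
  "lay EH a N y = (case hop_dist EH a y of enat k \<Rightarrow> min k N | \<infinity> \<Rightarrow> N)"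

lemma lay_le: "lay EH a N y \<le> N"
  unfolding lay_def by (cases "hop_dist EH a y") auto

lemma lay_a: "lay EH a N a = 0"
  unfolding lay_def by (simp add: zero_enat_def)

lemma lay_step:
  assumes "{y,z} \<in> EH" shows "lay EH a N z \<le> lay EH a N y + 1"
proof -
  have "hop_dist EH a z \<le> hop_dist EH a y + hop_dist EH y z" by (rule hop_tri)
  also have "\<dots> \<le> hop_dist EH a y + 1" using hop_edge[OF assms] by (intro add_left_mono)
  finally have h: "hop_dist EH a z \<le> hop_dist EH a y + 1" .
  show ?thesis
  proof (cases "hop_dist EH a y")
    case (enat k)
    then show ?thesis using h unfolding lay_def
      by (cases "hop_dist EH a z") (auto simp: one_enat_def)
  next
    case infinity
    then show ?thesis unfolding lay_def using lay_le[of EH a N z] unfolding lay_def by simp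
  qed
qed

lemma nat_sq_abs:
  assumes "(p::nat) \<le> q + 1" "q \<le> p + 1"
  shows "(real p - real q)^2 = \<bar>real p - real q\<bar>"
proof -
  have "p = q \<or> p = q + 1 \<or> q = p + 1" using assms by linarith
  then show ?thesis by (auto simp: power2_eq_square)
qed

lemma sum_ind:
  "(\<Sum>i<N. ((if i < p then 1 else 0) - (if i < q then 1 else 0))^2 :: real)
     = \<bar>real (min p N) - real (min q N)\<bar>"
proof (induction N)
  case 0 then show ?case by simp
next
  case (Suc N)
  then show ?case by (auto simp: min_def)
qed


lemma core:
  assumes G: "simple_graph V E" and sp: "spectral_sparsifier eps V E EH w"
    and eps: "0 < eps" "eps \<le> 1/3" and ab: "{a,b} \<in> E"
  shows "real (lay EH a N b) \<le> 2 * sqrt (real (card E))"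
proof -
  have sub: "EH \<subseteq> E" using sp unfolding spectral_sparsifier_def by blast
  have fV: "finite V" and eV: "\<And>e. e \<in> E \<Longrightarrow> e \<subseteq> V \<and> card e = 2"
    using G unfolding simple_graph_def by auto
  have fE: "finite E" using fV eV by (meson Pow_iff finite_Pow_iff finite_subset subsetI)
  have fEH: "finite EH" using fE sub finite_subset by blast
  define l where "l y = real (lay EH a N y)" for y
  define xi where "xi i y = (if i < lay EH a N y then 1 else 0 :: real)" for i y
  define QH where "QH x = (\<Sum>e\<in>EH. w e * qe x e)" for x
  define QG where "QG x = (\<Sum>e\<in>E. qe x e)" for x
  have L1: "(1-eps) * QH x \<le> QG x" for x
  proof -
    have "quad_form V (\<lambda>u v. (1 - eps) * laplacian EH w u v) x \<le> quad_form V (laplacian E (\<lambda>_. 1)) x"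
      using sp unfolding spectral_sparsifier_def loewner_le_def by blast
    then show ?thesis unfolding quad_scale quad_lap[OF G sub] quad_lap[OF G order_refl] QH_def QG_def
      by simp
  qed
  have L2: "QG x \<le> (1+eps) * QH x" for x
  proof -
    have "quad_form V (laplacian E (\<lambda>_. 1)) x \<le> quad_form V (\<lambda>u v. (1 + eps) * laplacian EH w u v) x"
      using sp unfolding spectral_sparsifier_def loewner_le_def by blast
    then show ?thesis unfolding quad_scale quad_lap[OF G sub] quad_lap[OF G order_refl] QH_def QG_def
      by simp
  qed
  have A: "(\<Sum>i<N. qe (xi i) e) = sabs l e" if eE: "e \<in> E" for e
  proof -
    obtain y z where yz: "y \<noteq> z" "e = {y,z}" using card2_obtain eV[OF eE] by blast
    have "(\<Sum>i<N. qe (xi i) e) = (\<Sum>i<N. ((if i < lay EH a N y then 1 else 0) - (if i < lay EH a N z then 1 else 0))^2 :: real)"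
      using yz by (simp add: qe_pair xi_def)
    also have "\<dots> = \<bar>l y - l z\<bar>" unfolding sum_ind l_def using lay_le[of EH a N]
      by (simp add: min_absorb1)
    finally show ?thesis using yz by (simp add: sabs_pair)
  qed
  have B: "qe l e = (sabs l e)^2" if eE: "e \<in> E" for e
  proof -
    obtain y z where yz: "y \<noteq> z" "e = {y,z}" using card2_obtain eV[OF eE] by blast
    then show ?thesis by (simp add: qe_pair sabs_pair)
  qed
  have C: "qe l e = sabs l e" if eH: "e \<in> EH" for e
  proof -
    obtain y z where yz: "y \<noteq> z" "e = {y,z}" using card2_obtain eV eH sub by blast
    have "lay EH a N z \<le> lay EH a N y + 1" using lay_step eH yz by blast
    moreover have "lay EH a N y \<le> lay EH a N z + 1" using lay_step[of z y EH] eH yz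
      by (simp add: insert_commute)
    ultimately show ?thesis using yz nat_sq_abs by (simp add: qe_pair sabs_pair l_def)
  qed
  have sabs_nn: "sabs l e \<ge> 0" if eE: "e \<in> E" for e
  proof -
    obtain y z where yz: "y \<noteq> z" "e = {y,z}" using card2_obtain eV[OF eE] by blast
    then show ?thesis by (simp add: sabs_pair)
  qed
  define S1 where "S1 = (\<Sum>e\<in>E. sabs l e)"
  define S2 where "S2 = (\<Sum>e\<in>E. (sabs l e)^2)"
  have h1: "QH l = (\<Sum>i<N. QH (xi i))"
  proof -
    have "QH l = (\<Sum>e\<in>EH. w e * (\<Sum>i<N. qe (xi i) e))"
      unfolding QH_def using C A sub by (intro sum.cong refl) auto
    also have "\<dots> = (\<Sum>i<N. QH (xi i))" unfolding QH_def sum_distrib_left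
      by (rule sum.swap)
    finally show ?thesis .
  qed
  have h2: "(1-eps) * QH l \<le> S1"
  proof -
    have "(1-eps) * QH l = (\<Sum>i<N. (1-eps) * QH (xi i))" by (simp add: h1 sum_distrib_left)
    also have "\<dots> \<le> (\<Sum>i<N. QG (xi i))" by (intro sum_mono L1)
    also have "\<dots> = (\<Sum>e\<in>E. \<Sum>i<N. qe (xi i) e)" unfolding QG_def by (rule sum.swap)
    also have "\<dots> = S1" unfolding S1_def using A by simp
    finally show ?thesis .
  qed
  have h3: "S2 \<le> (1+eps) * QH l"
  proof -
    have "S2 = QG l" unfolding S2_def QG_def using B by simp
    then show ?thesis using L2 by simp
  qed
  have S1nn: "S1 \<ge> 0" unfolding S1_def using sabs_nn by (simp add: sum_nonneg)
  have h4: "S2 \<le> 2 * S1"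
  proof -
    have "(1-eps) * S2 \<le> (1-eps) * ((1+eps) * QH l)" using h3 eps by (intro mult_left_mono) auto
    also have "\<dots> = (1+eps) * ((1-eps) * QH l)" by simp
    also have "\<dots> \<le> (1+eps) * S1" using h2 eps by (intro mult_left_mono) auto
    also have "\<dots> \<le> (1-eps) * (2 * S1)" using S1nn eps by (simp add: algebra_simps) (use mult_left_mono[of "eps*3" 1 S1] in simp)
    finally show ?thesis using eps by simp
  qed
  have h5: "S1 \<le> S2 / 4 + real (card E)"
  proof -
    have "S1 \<le> (\<Sum>e\<in>E. (sabs l e)^2 / 4 + 1)" unfolding S1_def
    proof (intro sum_mono)
      fix e assume "e \<in> E"
      have "0 \<le> (sabs l e - 2)^2" by simp
      then show "sabs l e \<le> (sabs l e)^2 / 4 + 1" by (simp add: power2_diff field_simps)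
    qed
    also have "\<dots> = S2 / 4 + real (card E)" unfolding S2_def
      by (simp add: sum.distrib sum_divide_distrib)
    finally show ?thesis .
  qed
  have S2m: "S2 \<le> 4 * real (card E)" using h4 h5 by linarith
  have ab_ne: "a \<noteq> b" using eV[OF ab] by (cases "a = b") auto
  have "(sabs l {a,b})^2 \<le> S2" unfolding S2_def using ab fE
    by (intro member_le_sum) auto
  moreover have "sabs l {a,b} = real (lay EH a N b)" using ab_ne by (simp add: sabs_pair l_def lay_a)
  ultimately have "(real (lay EH a N b))^2 \<le> 4 * real (card E)" using S2m by simp
  then have "real (lay EH a N b) \<le> sqrt (4 * real (card E))" by (rule real_le_rsqrt)
  also have "\<dots> = 2 * sqrt (real (card E))" by (simp add: real_sqrt_mult)
  finally show ?thesis .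
qed


lemma edge_bound:
  assumes G: "simple_graph V E" and sp: "spectral_sparsifier eps V E EH w"
    and eps: "0 < eps" "eps \<le> 1/3" and ab: "{a,b} \<in> E"
  shows "\<exists>D. hop_dist EH a b = enat D \<and> real D \<le> 2 * sqrt (real (card E))"
proof (cases "hop_dist EH a b")
  case (enat D)
  have "real (lay EH a D b) \<le> 2 * sqrt (real (card E))" by (rule core[OF G sp eps ab])
  then show ?thesis using enat unfolding lay_def by simp
next
  case infinity
  define N where "N = nat \<lceil>2 * sqrt (real (card E))\<rceil> + 1"
  have "real (lay EH a N b) \<le> 2 * sqrt (real (card E))" by (rule core[OF G sp eps ab])
  then have "real N \<le> 2 * sqrt (real (card E))" using infinity unfolding lay_def by simp
  moreover have "real N > 2 * sqrt (real (card E))" unfolding N_def by linarith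
  ultimately show ?thesis by simp
qed

theorem theorem4p2:
  "\<exists>C::real. \<exists>k::nat. C > 0 \<and>
     (\<forall>V E EH w eps. simple_graph V E \<longrightarrow> 0 < eps \<longrightarrow> eps \<le> 1/18 \<longrightarrow>
        spectral_sparsifier eps V E EH w \<longrightarrow>
        spanner (C * sqrt (real (card E)) * (1 + ln (real (card V))) ^ k) V E EH)"
proof (intro exI conjI allI impI)
  show "(2::real) > 0" by simp
  fix V E EH w and eps :: real
  assume G: "simple_graph V E" and e0: "0 < eps" and e1: "eps \<le> 1/18"
    and sp: "spectral_sparsifier eps V E EH w"
  have eps: "0 < eps" "eps \<le> 1/3" using e0 e1 by auto
  define K where "K = nat \<lfloor>2 * sqrt (real (card E))\<rfloor>"
  have Kle: "real K \<le> 2 * sqrt (real (card E))" unfolding K_def by simp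
  have EK: "hop_dist EH y z \<le> enat K" if yzE: "{y,z} \<in> E" for y z
  proof -
    obtain D where D: "hop_dist EH y z = enat D" "real D \<le> 2 * sqrt (real (card E))"
      using edge_bound[OF G sp eps yzE] by blast
    have "D \<le> K" unfolding K_def using D(2) by (simp add: le_nat_floor)
    then show ?thesis using D by simp
  qed
  have sub: "EH \<subseteq> E" using sp unfolding spectral_sparsifier_def by blast
  show "spanner (2 * sqrt (real (card E)) * (1 + ln (real (card V))) ^ 0) V E EH"
    unfolding spanner_def
  proof (intro conjI ballI impI sub)
    fix u v assume "u \<in> V" "v \<in> V" and fin: "hop_dist E u v \<noteq> \<infinity>"
    then obtain d where d: "hop_dist E u v = enat d" by auto
    obtain p where p: "is_walk E p" "hd p = u" "last p = v" "length p - 1 = d"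
      using hop_obtain[OF d] by blast
    have hb: "hop_dist EH u v \<le> enat (K * d)" using walk_bound[of E p EH K] p EK by simp
    then obtain h where h: "hop_dist EH u v = enat h" "h \<le> K * d"
      by (cases "hop_dist EH u v") auto
    show "hop_dist EH u v \<noteq> \<infinity>" using h by simp
    have "real h \<le> real K * real d" using h(2) by (metis of_nat_le_iff of_nat_mult)
    also have "\<dots> \<le> 2 * sqrt (real (card E)) * real d" using Kle by (intro mult_right_mono) auto
    finally show "real (the_enat (hop_dist EH u v))
        \<le> 2 * sqrt (real (card E)) * (1 + ln (real (card V))) ^ 0 * real (the_enat (hop_dist E u v))"
      using h d by simp
  qed
qed

end
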